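(* In the linear setting of the context, for all $\lambda>0$, $\sigma\in(0,1)$, $\theta\ge0$ and all $t\in[0,t_\infty)$, $$\eta(t)+\theta\big(\sigma x(t)^\top Qx(t)-2x(t)^\top PBKe(t^-)\big)\ge0\quad\text{and}\quad\eta(t)\ge0.$$ Moreover, for given $t_i$, $x(t_i)$ and $\eta(t_i)\ge0$, the next execution time given by the static rule $t^s_{i+1}=\inf\{t>t_i:\ \sigma x(t)^\top Qx(t)-2x(t)^\top PBKe(t^-)\le0\}$ is at most the next execution time $t^d_{i+1}$ given by the dynamic rule.
   Context: Consider $\dot x=Ax+Bu$, $x\in\mathbb{R}^n$, $u\in\mathbb{R}^m$, and a gain $K$ such that $A+BK$ is Hurwitz; let $P,Q$ be symmetric positive definite with $(A+BK)^\top P+P(A+BK)=-Q$, and $V(x)=x^\top Px$. The input is $u(t)=Kx(t_i)$ for $t\in[t_i,t_{i+1})$, with $e(t)=x(t_i)-x(t)$, so $\dot x=Ax+BK(x+e)$. $t_\infty=\lim t_i$ if infinitely many executions, else $+\infty$; $g(t^-)$ is the left limit. Dynamic event generator with parameters $\sigma\in(0,1)$, $\lambda>0$, $\theta\ge0$: $\dot\eta=-\lambda\eta+\sigma x^\top Qx-2x^\top PBKe$, $\eta(0)=0$ (resp. from $\eta(t_i)$ after $t_i$); $t_0=0$, $t_{i+1}=\inf\{t>t_i:\ \eta(t)+\theta(\sigma x(t)^\top Qx(t)-2x(t)^\top PBKe(t^-))\le0\}$. Assume $x(t_i)\ne0$ for all $i$. *)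

theory Defs
  imports "HOL-Analysis.Analysis"
begin

definition quad :: "real^'n^'n \<Rightarrow> real^'n \<Rightarrow> real" where
  "quad M x = x \<bullet> (M *v x)"

definition sym_mat :: "real^'n^'n \<Rightarrow> bool" where
  "sym_mat M \<longleftrightarrow> transpose M = M"

definition pos_def :: "real^'n^'n \<Rightarrow> bool" where
  "pos_def M \<longleftrightarrow> sym_mat M \<and> (\<forall>x. x \<noteq> 0 \<longrightarrow> quad M x > 0)"

definition complexify :: "real^'n^'n \<Rightarrow> complex^'n^'n" where
  "complexify M = (\<chi> i j. complex_of_real (M $ i $ j))"

definition hurwitz :: "real^'n^'n \<Rightarrow> bool" where
  "hurwitz M \<longleftrightarrow> (\<forall>(l::complex) (v::complex^'n).
      v \<noteq> 0 \<and> complexify M *v v = l *s v \<longrightarrow> Re l < 0)"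

text \<open>Flow of  dx/ds = A x + B K xi  from x(ti) = xi (input held at K xi), for s \<ge> ti.\<close>
definition lin_flow ::
  "real^'n^'n \<Rightarrow> real^'m^'n \<Rightarrow> real^'n^'m \<Rightarrow> real \<Rightarrow> real^'n \<Rightarrow> (real \<Rightarrow> real^'n) \<Rightarrow> bool" where
  "lin_flow A B K ti xi xf \<longleftrightarrow> xf ti = xi \<and>
     (\<forall>s\<ge>ti. (xf has_vector_derivative (A *v xf s + B *v (K *v xi))) (at s within {ti..}))"

definition trig ::
  "real \<Rightarrow> real^'n^'n \<Rightarrow> real^'n^'n \<Rightarrow> real^'m^'n \<Rightarrow> real^'n^'m \<Rightarrow> real^'n \<Rightarrow> real^'n \<Rightarrow> real" where
  "trig \<sigma> Q P B K x e = \<sigma> * quad Q x - 2 * (x \<bullet> ((P ** B ** K) *v e))"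

definition eta_flow ::
  "real \<Rightarrow> real \<Rightarrow> real^'n^'n \<Rightarrow> real^'n^'n \<Rightarrow> real^'m^'n \<Rightarrow> real^'n^'m \<Rightarrow> real \<Rightarrow> real^'n
    \<Rightarrow> real \<Rightarrow> (real \<Rightarrow> real^'n) \<Rightarrow> (real \<Rightarrow> real) \<Rightarrow> bool" where
  "eta_flow lam \<sigma> Q P B K ti xi eta0 xf ef \<longleftrightarrow> ef ti = eta0 \<and>
     (\<forall>s\<ge>ti. (ef has_real_derivative (- lam * ef s + trig \<sigma> Q P B K (xf s) (xi - xf s)))
               (at s within {ti..}))"

text \<open>Next execution time by the dynamic rule (infimum in the extended reals; Inf {} = \<infinity>).\<close>
definition next_dyn ::
  "real \<Rightarrow> real \<Rightarrow> real^'n^'n \<Rightarrow> real^'n^'n \<Rightarrow> real^'m^'n \<Rightarrow> real^'n^'m \<Rightarrow> real \<Rightarrow> real^'n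
    \<Rightarrow> (real \<Rightarrow> real^'n) \<Rightarrow> (real \<Rightarrow> real) \<Rightarrow> ereal" where
  "next_dyn \<theta> \<sigma> Q P B K ti xi xf ef =
     Inf {ereal s | s. s > ti \<and> ef s + \<theta> * trig \<sigma> Q P B K (xf s) (xi - xf s) \<le> 0}"

definition next_stat ::
  "real \<Rightarrow> real^'n^'n \<Rightarrow> real^'n^'n \<Rightarrow> real^'m^'n \<Rightarrow> real^'n^'m \<Rightarrow> real \<Rightarrow> real^'n
    \<Rightarrow> (real \<Rightarrow> real^'n) \<Rightarrow> ereal" where
  "next_stat \<sigma> Q P B K ti xi xf =
     Inf {ereal s | s. s > ti \<and> trig \<sigma> Q P B K (xf s) (xi - xf s) \<le> 0}"

text \<open>Left limit e(t^-); at t = 0 we use e(0) (the system starts at time 0).\<close>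
definition left_lim :: "(real \<Rightarrow> real^'n) \<Rightarrow> real \<Rightarrow> real^'n" where
  "left_lim e t = (if t = 0 then e 0 else Lim (at_left t) e)"

end

theory Submission
  imports Defs
begin
lemma ivl_deriv_at:
  assumes "\<And>s. s \<ge> a \<Longrightarrow> (g has_real_derivative g' s) (at s within {a..})" "a < x"
  shows "(g has_real_derivative g' x) (at x)"
proof -
  have "x \<in> interior {a..}" using assms(2) by simp
  then have "at x within {a..} = at x" by (rule at_within_interior)
  with assms(1)[of x] assms(2) show ?thesis by simp
qed

lemma ivl_cont:
  assumes "\<And>s. s \<ge> a \<Longrightarrow> (g has_real_derivative g' s) (at s within {a..})"
  shows "continuous_on {a..} g"
  by (rule DERIV_continuous_on) (use assms in auto)

lemma eta_nonneg:
  fixes ef tr :: "real \<Rightarrow> real"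
  assumes der: "\<And>s. s \<ge> a \<Longrightarrow> (ef has_real_derivative (-lam*ef s + tr s)) (at s within {a..})"
    and ea: "ef a \<ge> 0" and ab: "a \<le> b" and th: "\<theta> \<ge> 0"
    and q: "\<And>s. a \<le> s \<Longrightarrow> s \<le> b \<Longrightarrow> ef s + \<theta> * tr s \<ge> 0"
  shows "ef b \<ge> 0"
proof (cases "\<theta> = 0")
  case True then show ?thesis using q[of b] ab by simp
next
  case False
  then have thp: "\<theta> > 0" using th by simp
  define c where "c = lam + 1/\<theta>"
  define g where "g u = exp (c*u) * ef u" for u
  have gder: "(g has_real_derivative (exp (c* s) * (c * ef s + (-lam*ef s + tr s)))) (at s within {a..})"
    if "s \<ge> a" for s
    unfolding g_def
    by (rule derivative_eq_intros der[OF that] refl | simp add: algebra_simps)+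
  have gc: "continuous_on {a..b} g"
    using continuous_on_subset[OF ivl_cont[OF gder]] by auto
  have "g a \<le> g b"
  proof (rule DERIV_nonneg_imp_increasing_open[OF ab _ gc])
    fix x assume x: "a < x" "x < b"
    have "c * ef x + (-lam*ef x + tr x) = (ef x + \<theta> * tr x) / \<theta>"
      using thp by (simp add: c_def field_simps)
    also have "\<dots> \<ge> 0" using q[of x] x thp by simp
    finally show "\<exists>y. (g has_real_derivative y) (at x) \<and> 0 \<le> y"
      using ivl_deriv_at[OF gder x(1)] by (intro exI[of _ "exp (c*x) * (c * ef x + (-lam*ef x + tr x))"]) auto
  qed
  moreover have "g a \<ge> 0" using ea by (simp add: g_def)
  ultimately have "exp (c*b) * ef b \<ge> 0" by (simp add: g_def)
  then show ?thesis by (simp add: zero_le_mult_iff)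
qed

lemma eta_pos:
  fixes ef tr :: "real \<Rightarrow> real"
  assumes der: "\<And>s. s \<ge> a \<Longrightarrow> (ef has_real_derivative (-lam*ef s + tr s)) (at s within {a..})"
    and ea: "ef a \<ge> 0" and ab: "a < b"
    and q: "\<And>s. a < s \<Longrightarrow> s < b \<Longrightarrow> tr s > 0"
  shows "ef b > 0"
proof -
  define g where "g u = exp (lam*u) * ef u" for u
  have gder: "(g has_real_derivative (exp (lam* s) * (lam * ef s + (-lam*ef s + tr s)))) (at s within {a..})"
    if "s \<ge> a" for s
    unfolding g_def
    by (rule derivative_eq_intros der[OF that] refl | simp add: algebra_simps)+
  have gc: "continuous_on {a..b} g"
    using continuous_on_subset[OF ivl_cont[OF gder]] by auto
  have "g a < g b"
  proof (rule DERIV_pos_imp_increasing_open[OF ab _ gc])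
    fix x assume x: "a < x" "x < b"
    show "\<exists>y. (g has_real_derivative y) (at x) \<and> 0 < y"
      using ivl_deriv_at[OF gder x(1)] q[OF x]
      by (intro exI[of _ "exp (lam*x) * (lam * ef x + (-lam*ef x + tr x))"]) auto
  qed
  moreover have "g a \<ge> 0" using ea by (simp add: g_def)
  ultimately have "exp (lam*b) * ef b > 0" by (simp add: g_def)
  then show ?thesis by (simp add: zero_less_mult_iff)
qed

lemma cont_q:
  assumes "continuous_on S xf" "continuous_on S ef"
  shows "continuous_on S (\<lambda>s. ef s + \<theta> * trig \<sigma> Q P B K (xf s) (xi - xf s))"
  unfolding trig_def quad_def
  by (intro continuous_intros assms bounded_linear.continuous_on[OF matrix_vector_mul_bounded_linear])

lemma inf_ge:
  fixes q :: "real \<Rightarrow> real"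
  shows "ereal a \<le> Inf {ereal s | s. s > a \<and> q s \<le> 0}"
  by (rule Inf_greatest) auto

lemma inf_below:
  fixes q :: "real \<Rightarrow> real"
  assumes "a < s" "ereal s < Inf {ereal s | s. s > a \<and> q s \<le> 0}"
  shows "q s > 0"
proof (rule ccontr)
  assume "\<not> q s > 0"
  then have "ereal s \<in> {ereal s | s. s > a \<and> q s \<le> 0}" using assms(1) by auto
  then have "Inf {ereal s | s. s > a \<and> q s \<le> 0} \<le> ereal s" by (rule Inf_lower)
  with assms(2) show False by simp
qed

lemma inf_at:
  fixes q :: "real \<Rightarrow> real"
  assumes cq: "continuous_on {a..} q" and T: "Inf {ereal s | s. s > a \<and> q s \<le> 0} = ereal b"
    and ab: "a < b"
  shows "q b \<ge> 0"
proof (rule ccontr)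
  assume "\<not> q b \<ge> 0"
  then have neg: "q b < 0" by simp
  have "b \<in> {a..}" using ab by simp
  with cq neg obtain d where d: "d > 0" "\<And>x'. x' \<in> {a..} \<Longrightarrow> dist x' b < d \<Longrightarrow> dist (q x') (q b) < - q b"
    unfolding continuous_on_iff by (metis neg_0_less_iff_less)
  define s where "s = max ((a+b)/2) (b - d/2)"
  have s1: "a < s" using ab unfolding s_def by (simp add: less_max_iff_disj)
  have s2: "s < b" using ab d(1) unfolding s_def by simp
  have s3: "dist s b < d" using ab d(1) unfolding s_def dist_real_def by (simp add: abs_if)
  note s = s1 s2 s3
  have "q s > 0" using inf_below[of a s q] s T by simp
  moreover have "dist (q s) (q b) < - q b" using d(2)[of s] s by simp
  ultimately show False by (simp add: dist_real_def)
qed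

lemma inf_gt:
  fixes q :: "real \<Rightarrow> real"
  assumes "d > 0" "\<And>s. a < s \<Longrightarrow> s < a + d \<Longrightarrow> q s > 0"
  shows "ereal a < Inf {ereal s | s. s > a \<and> q s \<le> 0}"
proof -
  have "ereal (a + d) \<le> Inf {ereal s | s. s > a \<and> q s \<le> 0}"
  proof (rule Inf_greatest)
    fix y assume "y \<in> {ereal s | s. s > a \<and> q s \<le> 0}"
    then obtain s where "y = ereal s" "s > a" "q s \<le> 0" by auto
    then show "ereal (a + d) \<le> y" using assms(2)[of s] by force
  qed
  moreover have "ereal a < ereal (a + d)" using assms(1) by simp
  ultimately show ?thesis by order
qed

lemma cont_pos_near:
  fixes q :: "real \<Rightarrow> real"
  assumes cq: "continuous_on {a..} q" and qa: "q a > 0"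
  shows "\<exists>d>0. \<forall>s. a < s \<and> s < a + d \<longrightarrow> q s > 0"
proof -
  have "a \<in> {a..}" by simp
  with cq qa obtain d where d: "d > 0" "\<And>x'. x' \<in> {a..} \<Longrightarrow> dist x' a < d \<Longrightarrow> dist (q x') (q a) < q a"
    unfolding continuous_on_iff by metis
  have "q s > 0" if "a < s" "s < a + d" for s
  proof -
    have "\<bar>q s - q a\<bar> < q a" using d(2)[of s] that by (simp add: dist_real_def)
    then show ?thesis by linarith
  qed
  then show ?thesis using d(1) by blast
qed

lemma left_lim_lemma:
  fixes g :: "real \<Rightarrow> 'a::real_normed_vector"
  assumes cg: "continuous_on {a..} g" and at: "a < t" and ev: "\<And>s. a \<le> s \<Longrightarrow> s < t \<Longrightarrow> e s = c - g s"
  shows "Lim (at_left t) e = c - g t"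
proof (rule tendsto_Lim)
  show "\<not> trivial_limit (at_left t)" by (simp add: trivial_limit_at_left_real)
  have "t \<in> interior {a..}" using at by simp
  then have "isCont g t" using cg continuous_on_interior by blast
  then have "((\<lambda>s. c - g s) \<longlongrightarrow> c - g t) (at t)"
    by (intro tendsto_intros) (simp add: isCont_def)
  then have "((\<lambda>s. c - g s) \<longlongrightarrow> c - g t) (at_left t)"
    by (simp add: filterlim_at_split)
  moreover have "eventually (\<lambda>s. c - g s = e s) (at_left t)"
    using eventually_at_left_real[OF at] by (rule eventually_mono) (use ev in auto)
  ultimately show "(e \<longlongrightarrow> c - g t) (at_left t)" by (rule Lim_transform_eventually)
qed


theorem mainTheorem5:
  fixes A :: "real^'n^'n" and B :: "real^'m^'n" and K :: "real^'n^'m"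
    and P Q :: "real^'n^'n"
    and lam \<sigma> \<theta> :: real
    and x :: "real \<Rightarrow> real^'n" and e :: "real \<Rightarrow> real^'n" and eta :: "real \<Rightarrow> real"
    and tau :: "nat \<Rightarrow> ereal"
    and xs :: "nat \<Rightarrow> real \<Rightarrow> real^'n" and etas :: "nat \<Rightarrow> real \<Rightarrow> real"
  assumes hurw: "hurwitz (A + B ** K)"
    and P_pd: "pos_def P" and Q_pd: "pos_def Q"
    and lyap: "transpose (A + B ** K) ** P + P ** (A + B ** K) = - Q"
    and lam_pos: "lam > 0" and sigma: "0 < \<sigma>" "\<sigma> < 1" and theta: "\<theta> \<ge> 0"
    and eta0: "eta 0 = 0"
    and tau0: "tau 0 = 0"
    and tau_inf: "\<And>i. tau i = \<infinity> \<Longrightarrow> tau (Suc i) = \<infinity>"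
    and step: "\<And>i. tau i \<noteq> \<infinity> \<Longrightarrow>
        let ti = real_of_ereal (tau i) in
          lin_flow A B K ti (x ti) (xs i)
        \<and> eta_flow lam \<sigma> Q P B K ti (x ti) (eta ti) (xs i) (etas i)
        \<and> tau (Suc i) = next_dyn \<theta> \<sigma> Q P B K ti (x ti) (xs i) (etas i)
        \<and> (\<forall>s. ti \<le> s \<and> ereal s \<le> tau (Suc i) \<longrightarrow> x s = xs i s \<and> eta s = etas i s)
        \<and> (\<forall>s. ti \<le> s \<and> ereal s < tau (Suc i) \<longrightarrow> e s = x ti - x s)
        \<and> x ti \<noteq> 0"
  shows "(\<forall>t. 0 \<le> t \<and> ereal t < (SUP i. tau i) \<longrightarrow>
            eta t + \<theta> * trig \<sigma> Q P B K (x t) (left_lim e t) \<ge> 0 \<and> eta t \<ge> 0)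
       \<and> (\<forall>ti xi eta_i xf ef.
            xi \<noteq> 0 \<and> eta_i \<ge> 0 \<and> lin_flow A B K ti xi xf
            \<and> eta_flow lam \<sigma> Q P B K ti xi eta_i xf ef
            \<longrightarrow> next_stat \<sigma> Q P B K ti xi xf \<le> next_dyn \<theta> \<sigma> Q P B K ti xi xf ef)"
proof -
  have quadpos: "\<And>y. y \<noteq> 0 \<Longrightarrow> quad Q y > 0" using Q_pd by (simp add: pos_def_def)
  have trig0: "\<And>y. trig \<sigma> Q P B K y 0 = \<sigma> * quad Q y" by (simp add: trig_def)
  have S: "lin_flow A B K ti (x ti) (xs i)
        \<and> eta_flow lam \<sigma> Q P B K ti (x ti) (eta ti) (xs i) (etas i)
        \<and> tau (Suc i) = next_dyn \<theta> \<sigma> Q P B K ti (x ti) (xs i) (etas i)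
        \<and> (\<forall>s. ti \<le> s \<and> ereal s \<le> tau (Suc i) \<longrightarrow> x s = xs i s \<and> eta s = etas i s)
        \<and> (\<forall>s. ti \<le> s \<and> ereal s < tau (Suc i) \<longrightarrow> e s = x ti - x s)
        \<and> x ti \<noteq> 0" if "tau i = ereal ti" for i ti
    using step[of i] that by (simp add: Let_def)
  have IV: "continuous_on {ti..} (xs i) \<and> ereal ti < tau (Suc i)
     \<and> (\<forall>s. ti < s \<and> ereal s < tau (Suc i) \<longrightarrow>
           etas i s + \<theta> * trig \<sigma> Q P B K (xs i s) (x ti - xs i s) > 0)
     \<and> (\<forall>b. tau (Suc i) = ereal b \<longrightarrow>
           etas i b + \<theta> * trig \<sigma> Q P B K (xs i b) (x ti - xs i b) \<ge> 0)
     \<and> (\<forall>s. ti \<le> s \<and> ereal s \<le> tau (Suc i) \<longrightarrow> etas i s \<ge> 0)"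
    if ti: "tau i = ereal ti" and eti: "eta ti \<ge> 0" for i ti
  proof -
    note Si = S[OF ti]
    have xflow: "xs i ti = x ti" "\<And>s. s \<ge> ti \<Longrightarrow> (xs i has_vector_derivative (A *v xs i s + B *v (K *v x ti))) (at s within {ti..})"
      using Si by (auto simp: lin_flow_def)
    have eflow: "etas i ti = eta ti" "\<And>s. s \<ge> ti \<Longrightarrow> (etas i has_real_derivative (- lam * etas i s + trig \<sigma> Q P B K (xs i s) (x ti - xs i s))) (at s within {ti..})"
      using Si by (auto simp: eta_flow_def)
    have xnz: "x ti \<noteq> 0" using Si by simp
    have cx: "continuous_on {ti..} (xs i)"
      unfolding continuous_on_eq_continuous_within
      using xflow(2) has_vector_derivative_continuous by blast
    have ce: "continuous_on {ti..} (etas i)" by (rule ivl_cont[OF eflow(2)])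
    define qq where "qq = (\<lambda>s. etas i s + \<theta> * trig \<sigma> Q P B K (xs i s) (x ti - xs i s))"
    have cq: "continuous_on {ti..} qq" unfolding qq_def by (rule cont_q[OF cx ce])
    have T: "tau (Suc i) = Inf {ereal s | s. s > ti \<and> qq s \<le> 0}"
      using Si by (simp add: next_dyn_def qq_def)
    have qpos: "quad Q (x ti) > 0" using quadpos xnz by simp
    have qqti: "qq ti = eta ti + \<theta> * (\<sigma> * quad Q (x ti))"
      by (simp add: qq_def xflow(1) eflow(1) trig0)
    have qqti0: "qq ti \<ge> 0" unfolding qqti using eti theta sigma qpos by simp
    have near: "\<exists>d>0. \<forall>s. ti < s \<and> s < ti + d \<longrightarrow> qq s > 0"
    proof (cases "qq ti > 0")
      case True then show ?thesis using cont_pos_near[OF cq] by blast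
    next
      case False
      then have z: "eta ti + \<theta> * (\<sigma> * quad Q (x ti)) = 0" using qqti0 qqti by simp
      have "\<theta> * (\<sigma> * quad Q (x ti)) \<ge> 0" using theta sigma qpos by simp
      then have p0: "\<theta> * (\<sigma> * quad Q (x ti)) = 0" and et0: "eta ti = 0" using z eti by linarith+
      have "\<sigma> * quad Q (x ti) \<noteq> 0" using sigma qpos by simp
      then have th0: "\<theta> = 0" using p0 by simp
      have der: "(etas i has_real_derivative (\<sigma> * quad Q (x ti))) (at ti within {ti..})"
        using eflow(2)[of ti] by (simp add: xflow(1) eflow(1) et0 trig0)
      obtain d where d: "d > 0" "\<And>h. h > 0 \<Longrightarrow> ti + h \<in> {ti..} \<Longrightarrow> h < d \<Longrightarrow> etas i ti < etas i (ti + h)"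
        using has_real_derivative_pos_inc_right[OF der] sigma qpos by auto
      have "qq s > 0" if "ti < s" "s < ti + d" for s
        using d(2)[of "s - ti"] that by (simp add: qq_def th0 eflow(1) et0)
      then show ?thesis using d(1) by blast
    qed
    obtain dd where dd: "dd > 0" "\<And>s. ti < s \<Longrightarrow> s < ti + dd \<Longrightarrow> qq s > 0" using near by blast
    have a: "ereal ti < tau (Suc i)" unfolding T by (rule inf_gt[OF dd])
    have b: "\<forall>s. ti < s \<and> ereal s < tau (Suc i) \<longrightarrow> qq s > 0"
    proof (intro allI impI)
      fix s assume "ti < s \<and> ereal s < tau (Suc i)"
      then show "qq s > 0" using inf_below[of ti s qq] T by simp
    qed
    have c: "\<forall>b. tau (Suc i) = ereal b \<longrightarrow> qq b \<ge> 0"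
    proof (intro allI impI)
      fix b assume tb: "tau (Suc i) = ereal b"
      then have "ti < b" using a by simp
      then show "qq b \<ge> 0" using inf_at[OF cq, of b] T tb by simp
    qed
    have d: "\<forall>s. ti \<le> s \<and> ereal s \<le> tau (Suc i) \<longrightarrow> etas i s \<ge> 0"
    proof (intro allI impI)
      fix s assume s: "ti \<le> s \<and> ereal s \<le> tau (Suc i)"
      show "etas i s \<ge> 0"
      proof (rule eta_nonneg[OF eflow(2)])
        show "0 \<le> etas i ti" using eflow(1) eti by simp
        show "ti \<le> s" using s by simp
        show "0 \<le> \<theta>" by (rule theta)
        fix u assume u: "ti \<le> u" "u \<le> s"
        show "0 \<le> etas i u + \<theta> * trig \<sigma> Q P B K (xs i u) (x ti - xs i u)"
        proof (cases "u = ti")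
          case True then show ?thesis using qqti0 by (simp add: qq_def)
        next
          case False
          then have "ti < u" using u by simp
          moreover have "ereal u \<le> tau (Suc i)" using u s order_trans[of "ereal u" "ereal s"] by simp
          ultimately have "qq u \<ge> 0"
          proof (cases "ereal u < tau (Suc i)")
            case True then show ?thesis using b \<open>ti < u\<close> by (simp add: less_imp_le)
          next
            case False then have "tau (Suc i) = ereal u" using \<open>ereal u \<le> tau (Suc i)\<close> by simp
            then show ?thesis using c by simp
          qed
          then show ?thesis by (simp add: qq_def)
        qed
      qed
    qed
    have b': "\<forall>s. ti < s \<and> ereal s < tau (Suc i) \<longrightarrow>
           etas i s + \<theta> * trig \<sigma> Q P B K (xs i s) (x ti - xs i s) > 0" using b by (simp add: qq_def)
    have c': "\<forall>b. tau (Suc i) = ereal b \<longrightarrow>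
           etas i b + \<theta> * trig \<sigma> Q P B K (xs i b) (x ti - xs i b) \<ge> 0" using c by (simp add: qq_def)
    show ?thesis by (intro conjI cx a b' c' d)
  qed
  have Inv: "tau i \<noteq> \<infinity> \<longrightarrow> (\<exists>r. tau i = ereal r \<and> r \<ge> 0 \<and> eta r \<ge> 0)" for i
  proof (induction i)
    case 0 then show ?case using tau0 eta0 by (auto simp: zero_ereal_def)
  next
    case (Suc i)
    show ?case
    proof
      assume fin: "tau (Suc i) \<noteq> \<infinity>"
      then have "tau i \<noteq> \<infinity>" using tau_inf by blast
      with Suc obtain r where r: "tau i = ereal r" "r \<ge> 0" "eta r \<ge> 0" by blast
      note IVi = IV[OF r(1) r(3)]
      then have lt: "ereal r < tau (Suc i)" by blast
      obtain b where b: "tau (Suc i) = ereal b"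
        using fin lt by (cases "tau (Suc i)") auto
      have rb: "r < b" using lt b by simp
      have "eta b = etas i b" using S[OF r(1)] b rb by simp
      moreover have "etas i b \<ge> 0" using IVi b rb by simp
      ultimately show "\<exists>r. tau (Suc i) = ereal r \<and> r \<ge> 0 \<and> eta r \<ge> 0"
        using b rb r(2) by auto
    qed
  qed
  have part1: "eta t + \<theta> * trig \<sigma> Q P B K (x t) (left_lim e t) \<ge> 0 \<and> eta t \<ge> 0"
    if t0: "0 \<le> t" and tsup: "ereal t < (SUP i. tau i)" for t
  proof -
    obtain j where j: "ereal t < tau j" using tsup unfolding less_SUP_iff by blast
    define j0 where "j0 = (LEAST j. ereal t < tau j)"
    have j0: "ereal t < tau j0" unfolding j0_def using j by (rule LeastI)
    have "j0 \<noteq> 0"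
    proof
      assume "j0 = 0"
      with j0 tau0 have "ereal t < 0" by simp
      with t0 show False by simp
    qed
    then obtain i where i: "j0 = Suc i" using not0_implies_Suc by blast
    have "\<not> ereal t < tau i" using not_less_Least[of i "\<lambda>j. ereal t < tau j"] i unfolding j0_def by simp
    then have ti_le: "tau i \<le> ereal t" by simp
    then have "tau i \<noteq> \<infinity>" by (cases "tau i") auto
    with Inv[of i] obtain r where r: "tau i = ereal r" "r \<ge> 0" "eta r \<ge> 0" by blast
    have rt: "r \<le> t" using ti_le r(1) by simp
    have tlt: "ereal t < tau (Suc i)" using j0 i by simp
    note Si = S[OF r(1)]
    note IVi = IV[OF r(1) r(3)]
    have Sx: "\<forall>s. r \<le> s \<and> ereal s \<le> tau (Suc i) \<longrightarrow> x s = xs i s \<and> eta s = etas i s"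
      using Si by blast
    have tle: "ereal t \<le> tau (Suc i)" using tlt by simp
    have xt: "x t = xs i t" and et: "eta t = etas i t" using Sx[rule_format, of t] rt tle by simp_all
    have IVd: "\<forall>s. r \<le> s \<and> ereal s \<le> tau (Suc i) \<longrightarrow> etas i s \<ge> 0" using IVi by blast
    have etpos: "eta t \<ge> 0" using IVd[rule_format, of t] rt tle et by simp
    have q: "eta t + \<theta> * trig \<sigma> Q P B K (x t) (left_lim e t) \<ge> 0"
    proof (cases "t = r")
      case True
      show ?thesis
      proof (cases i)
        case 0
        then have "r = 0" using r(1) tau0 by (simp add: zero_ereal_def)
        then have t00: "t = 0" using True by simp
        have Se: "\<forall>s. r \<le> s \<and> ereal s < tau (Suc i) \<longrightarrow> e s = x r - x s" using Si by blast
        have "e 0 = x 0 - x 0" using Se[rule_format, of 0] \<open>r = 0\<close> tlt t00 by simp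
        then have "left_lim e t = 0" using t00 by (simp add: left_lim_def)
        moreover have "x 0 \<noteq> 0" using Si \<open>r = 0\<close> by simp
        ultimately show ?thesis using t00 eta0 trig0 quadpos theta sigma
          by (simp add: less_imp_le)
      next
        case (Suc k)
        have "tau (Suc k) = ereal t" using Suc r(1) True by simp
        have "tau k \<noteq> \<infinity>"
        proof
          assume "tau k = \<infinity>"
          then have "tau (Suc k) = \<infinity>" by (rule tau_inf)
          with \<open>tau (Suc k) = ereal t\<close> show False by simp
        qed
        with Inv[of k] obtain rk where rk: "tau k = ereal rk" "rk \<ge> 0" "eta rk \<ge> 0" by blast
        have tk: "tau (Suc k) = ereal t" using Suc r(1) True by simp
        note IVk = IV[OF rk(1) rk(3)]
        note Sk = S[OF rk(1)]
        have rkt: "rk < t" using IVk tk by simp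
        have ll: "left_lim e t = x rk - xs k t"
        proof -
          have "Lim (at_left t) e = x rk - xs k t"
          proof (rule left_lim_lemma[of rk "xs k"])
            show "continuous_on {rk..} (xs k)" using IVk by blast
            show "rk < t" by (rule rkt)
            fix s assume "rk \<le> s" "s < t"
            then show "e s = x rk - xs k s" using Sk tk by simp
          qed
          then show ?thesis using rkt rk(2) by (simp add: left_lim_def)
        qed
        have Skx: "\<forall>s. rk \<le> s \<and> ereal s \<le> tau (Suc k) \<longrightarrow> x s = xs k s \<and> eta s = etas k s"
          using Sk by blast
        have "x t = xs k t" "eta t = etas k t" using Skx[rule_format, of t] tk rkt by simp_all
        moreover have "etas k t + \<theta> * trig \<sigma> Q P B K (xs k t) (x rk - xs k t) \<ge> 0"
          using IVk tk by blast
        ultimately show ?thesis using ll by simp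
      qed
    next
      case False
      then have rt': "r < t" using rt by simp
      have ll: "left_lim e t = x r - xs i t"
      proof -
        have "Lim (at_left t) e = x r - xs i t"
        proof (rule left_lim_lemma[of r "xs i"])
          show "continuous_on {r..} (xs i)" using IVi by blast
          show "r < t" by (rule rt')
          fix s assume s: "r \<le> s" "s < t"
          then have "ereal s < tau (Suc i)" using tlt less_trans[of "ereal s" "ereal t"] by simp
          then show "e s = x r - xs i s" using Si s by simp
        qed
        then show ?thesis using rt' r(2) by (simp add: left_lim_def)
      qed
      have "etas i t + \<theta> * trig \<sigma> Q P B K (xs i t) (x r - xs i t) > 0"
        using IVi rt' tlt by blast
      then show ?thesis using ll xt et by simp
    qed
    show ?thesis using q etpos by simp
  qed
  have part2: "next_stat \<sigma> Q P B K ti xi xf \<le> next_dyn \<theta> \<sigma> Q P B K ti xi xf ef"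
    if h: "xi \<noteq> 0" "eta_i \<ge> 0" "lin_flow A B K ti xi xf" "eta_flow lam \<sigma> Q P B K ti xi eta_i xf ef"
    for ti xi eta_i xf ef
  proof -
    define tr where "tr = (\<lambda>s. trig \<sigma> Q P B K (xf s) (xi - xf s))"
    have eflow: "ef ti = eta_i" "\<And>s. s \<ge> ti \<Longrightarrow> (ef has_real_derivative (- lam * ef s + tr s)) (at s within {ti..})"
      using h(4) by (auto simp: eta_flow_def tr_def)
    have NS: "next_stat \<sigma> Q P B K ti xi xf = Inf {ereal s | s. s > ti \<and> tr s \<le> 0}"
      by (simp add: next_stat_def tr_def)
    show ?thesis
      unfolding next_dyn_def NS
    proof (rule Inf_greatest)
      fix y assume "y \<in> {ereal s | s. s > ti \<and> ef s + \<theta> * trig \<sigma> Q P B K (xf s) (xi - xf s) \<le> 0}"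
      then obtain s where s: "y = ereal s" "s > ti" "ef s + \<theta> * tr s \<le> 0" by (auto simp: tr_def)
      show "Inf {ereal s | s. s > ti \<and> tr s \<le> 0} \<le> y"
      proof (rule ccontr)
        assume "\<not> Inf {ereal s | s. s > ti \<and> tr s \<le> 0} \<le> y"
        then have lt: "ereal s < Inf {ereal s | s. s > ti \<and> tr s \<le> 0}" using s(1) by simp
        have trp: "tr u > 0" if "ti < u" "u \<le> s" for u
          using inf_below[of ti u tr] that lt by (meson ereal_less_eq(3) le_less_trans)
        have "ef s > 0"
          by (rule eta_pos[OF eflow(2)]) (use eflow(1) h(2) s(2) trp in auto)
        moreover have "\<theta> * tr s \<ge> 0" using theta trp[of s] s(2) by simp
        ultimately show False using s(3) by simp
      qed
    qed
  qed
  show ?thesis using part1 part2 by blast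
qed

end
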